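(* Let $p$ be a prime. For $i\in\{1,2\}$ let $D_i$ be a finite group, $\psi_i:D_i\to\mathrm{GL}_{d_i}(\mathbb{F}_p)$ a representation, and $G_i=\mathbb{Z}_p^{d_i}\rtimes_{\psi_i}D_i$, where $p\nmid|D_1||D_2|$. Then the following are equivalent: (i) $G_1\cong G_2$; (ii) there exists an isomorphism $\sigma:D_1\to D_2$ such that $\psi_2\circ\sigma\cong\psi_1$ (as representations of $D_1$). Moreover, if (ii) holds, there exists an isomorphism $f:G_1\to G_2$ with $f(D_1)=D_2$ and $f|_{D_1}=\sigma$.
   Context: $\mathbb{Z}_p^{d}\rtimes_\psi D$ denotes the semidirect product in which $D$ acts on $\mathbb{Z}_p^d=\mathbb{F}_p^d$ via $\psi$; $D_i$ is identified with its canonical complement in $G_i$. *)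

theory Defs
  imports "HOL-Algebra.Algebra"
begin

text \<open>Vectors of F_p^d: functions nat => int with entries in {0..<p}, supported on {0..<d}.\<close>
definition fvecs :: "int \<Rightarrow> nat \<Rightarrow> (nat \<Rightarrow> int) set" where
  "fvecs p d = {v. (\<forall>i. 0 \<le> v i \<and> v i < p) \<and> (\<forall>i. d \<le> i \<longrightarrow> v i = 0)}"

definition fvec_zero :: "nat \<Rightarrow> int" where
  "fvec_zero = (\<lambda>i. 0)"

definition fvec_add :: "int \<Rightarrow> nat \<Rightarrow> (nat \<Rightarrow> int) \<Rightarrow> (nat \<Rightarrow> int) \<Rightarrow> (nat \<Rightarrow> int)" where
  "fvec_add p d v w = (\<lambda>i. if i < d then (v i + w i) mod p else 0)"

definition fmats :: "int \<Rightarrow> nat \<Rightarrow> (nat \<Rightarrow> nat \<Rightarrow> int) set" where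
  "fmats p d = {A. (\<forall>i j. 0 \<le> A i j \<and> A i j < p) \<and> (\<forall>i j. d \<le> i \<or> d \<le> j \<longrightarrow> A i j = 0)}"

definition fmat_mult :: "int \<Rightarrow> nat \<Rightarrow> (nat \<Rightarrow> nat \<Rightarrow> int) \<Rightarrow> (nat \<Rightarrow> nat \<Rightarrow> int) \<Rightarrow> (nat \<Rightarrow> nat \<Rightarrow> int)" where
  "fmat_mult p d A B = (\<lambda>i j. if i < d \<and> j < d then (\<Sum>k<d. A i k * B k j) mod p else 0)"

definition fmat_one :: "nat \<Rightarrow> (nat \<Rightarrow> nat \<Rightarrow> int)" where
  "fmat_one d = (\<lambda>i j. if i = j \<and> i < d then 1 else 0)"

definition fmat_act :: "int \<Rightarrow> nat \<Rightarrow> (nat \<Rightarrow> nat \<Rightarrow> int) \<Rightarrow> (nat \<Rightarrow> int) \<Rightarrow> (nat \<Rightarrow> int)" where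
  "fmat_act p d A v = (\<lambda>i. if i < d then (\<Sum>k<d. A i k * v k) mod p else 0)"

definition GL :: "int \<Rightarrow> nat \<Rightarrow> (nat \<Rightarrow> nat \<Rightarrow> int) monoid" where
  "GL p d = \<lparr> carrier = {A \<in> fmats p d. \<exists>B \<in> fmats p d.
                  fmat_mult p d A B = fmat_one d \<and> fmat_mult p d B A = fmat_one d},
             monoid.mult = fmat_mult p d, one = fmat_one d \<rparr>"

definition rep_equiv :: "('a, 'c) monoid_scheme \<Rightarrow> int \<Rightarrow> nat \<Rightarrow> nat
    \<Rightarrow> ('a \<Rightarrow> nat \<Rightarrow> nat \<Rightarrow> int) \<Rightarrow> ('a \<Rightarrow> nat \<Rightarrow> nat \<Rightarrow> int) \<Rightarrow> bool" where
  "rep_equiv D p d1 d2 rho1 rho2 \<longleftrightarrow> d1 = d2 \<and>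
     (\<exists>T \<in> carrier (GL p d1). \<forall>g \<in> carrier D.
        fmat_mult p d1 T (rho1 g) = fmat_mult p d1 (rho2 g) T)"

definition semidirect :: "int \<Rightarrow> nat \<Rightarrow> ('a, 'c) monoid_scheme \<Rightarrow> ('a \<Rightarrow> nat \<Rightarrow> nat \<Rightarrow> int)
    \<Rightarrow> ((nat \<Rightarrow> int) \<times> 'a) monoid" where
  "semidirect p d D psi = \<lparr> carrier = fvecs p d \<times> carrier D,
     monoid.mult = (\<lambda>(v, g) (w, h). (fvec_add p d v (fmat_act p d (psi g) w), g \<otimes>\<^bsub>D\<^esub> h)),
     one = (fvec_zero, \<one>\<^bsub>D\<^esub>) \<rparr>"

definition complement :: "('a, 'c) monoid_scheme \<Rightarrow> ((nat \<Rightarrow> int) \<times> 'a) set" where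
  "complement D = {fvec_zero} \<times> carrier D"

end

theory Submission
  imports Defs
begin


lemma fvecsD: "v \<in> fvecs p d \<Longrightarrow> 0 \<le> v i \<and> v i < p"
  "v \<in> fvecs p d \<Longrightarrow> d \<le> i \<Longrightarrow> v i = 0"
  by (auto simp: fvecs_def)

lemma fmatsD: "A \<in> fmats p d \<Longrightarrow> 0 \<le> A i j \<and> A i j < p"
  "A \<in> fmats p d \<Longrightarrow> d \<le> i \<or> d \<le> j \<Longrightarrow> A i j = 0"
  by (auto simp: fmats_def)

lemma fvec_add_closed: "0 < p \<Longrightarrow> fvec_add p d v w \<in> fvecs p d"
  by (auto simp: fvecs_def fvec_add_def)

lemma fmat_act_closed: "0 < p \<Longrightarrow> fmat_act p d A v \<in> fvecs p d"
  by (auto simp: fvecs_def fmat_act_def)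

lemma fmat_mult_closed: "0 < p \<Longrightarrow> fmat_mult p d A B \<in> fmats p d"
  by (auto simp: fmats_def fmat_mult_def)

lemma fvec_zero_mem: "0 < p \<Longrightarrow> fvec_zero \<in> fvecs p d"
  by (auto simp: fvecs_def fvec_zero_def)

lemma fmat_one_mem: "1 < p \<Longrightarrow> fmat_one d \<in> fmats p d"
  by (auto simp: fmats_def fmat_one_def)

lemma fvecs_mod: "v \<in> fvecs p d \<Longrightarrow> v i mod p = v i"
  by (auto simp: fvecs_def)

lemma fvec_add_zero: "v \<in> fvecs p d \<Longrightarrow> fvec_add p d fvec_zero v = v"
  "v \<in> fvecs p d \<Longrightarrow> fvec_add p d v fvec_zero = v"
  by (auto simp: fvec_add_def fvec_zero_def fvecs_mod fvecsD(2) intro!: ext)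

lemma fvec_add_comm: "fvec_add p d v w = fvec_add p d w v"
  by (auto simp: fvec_add_def add.commute intro!: ext)

lemma fvec_add_assoc: "fvec_add p d (fvec_add p d u v) w = fvec_add p d u (fvec_add p d v w)"
  by (auto simp: fvec_add_def mod_simps add.assoc intro!: ext)

lemma fvec_add_cancel:
  assumes "v \<in> fvecs p d" "w \<in> fvecs p d" "fvec_add p d u v = fvec_add p d u w"
  shows "v = w"
proof
  fix i show "v i = w i"
  proof (cases "i < d")
    case True
    with assms(3) have "(u i + v i) mod p = (u i + w i) mod p"
      by (metis fvec_add_def)
    hence "((u i + v i) - u i) mod p = ((u i + w i) - u i) mod p"
      by (metis mod_diff_left_eq)
    thus ?thesis using fvecs_mod[OF assms(1)] fvecs_mod[OF assms(2)] by simp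
  next
    case False thus ?thesis using assms by (simp add: fvecsD)
  qed
qed

definition fvec_neg :: "int \<Rightarrow> (nat \<Rightarrow> int) \<Rightarrow> (nat \<Rightarrow> int)" where
  "fvec_neg p v = (\<lambda>i. (- v i) mod p)"

lemma fvec_neg_closed: "0 < p \<Longrightarrow> v \<in> fvecs p d \<Longrightarrow> fvec_neg p v \<in> fvecs p d"
  by (auto simp: fvecs_def fvec_neg_def)

lemma fvec_neg_add: "v \<in> fvecs p d \<Longrightarrow> fvec_add p d (fvec_neg p v) v = fvec_zero"
  by (auto simp: fvec_add_def fvec_neg_def fvec_zero_def mod_simps intro!: ext)

lemma fmat_act_add: "fmat_act p d A (fvec_add p d v w) = fvec_add p d (fmat_act p d A v) (fmat_act p d A w)"
proof -
  have "(\<Sum>k<d. A i k * ((v k + w k) mod p)) mod p = ((\<Sum>k<d. A i k * v k) mod p + (\<Sum>k<d. A i k * w k) mod p) mod p" for i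
  proof -
    have "(\<Sum>k<d. A i k * ((v k + w k) mod p)) mod p = (\<Sum>k<d. (A i k * ((v k + w k) mod p)) mod p) mod p"
      by (simp add: mod_sum_eq)
    also have "\<dots> = (\<Sum>k<d. (A i k * (v k + w k)) mod p) mod p" by (simp add: mod_mult_right_eq)
    also have "\<dots> = (\<Sum>k<d. A i k * v k + A i k * w k) mod p" by (simp add: mod_sum_eq distrib_left)
    also have "\<dots> = ((\<Sum>k<d. A i k * v k) mod p + (\<Sum>k<d. A i k * w k) mod p) mod p"
      by (simp add: sum.distrib mod_add_eq)
    finally show ?thesis .
  qed
  moreover have "(\<Sum>k<d. A i k * (if k < d then (v k + w k) mod p else 0)) = (\<Sum>k<d. A i k * ((v k + w k) mod p))" for i
    by (rule sum.cong) auto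
  ultimately show ?thesis by (auto simp: fmat_act_def fvec_add_def intro!: ext)
qed

lemma fmat_act_mult: "fmat_act p d (fmat_mult p d A B) v = fmat_act p d A (fmat_act p d B v)"
proof -
  have "(\<Sum>k<d. ((\<Sum>l<d. A i l * B l k) mod p) * v k) mod p = (\<Sum>l<d. A i l * ((\<Sum>k<d. B l k * v k) mod p)) mod p" for i
  proof -
    have "(\<Sum>k<d. ((\<Sum>l<d. A i l * B l k) mod p) * v k) mod p = (\<Sum>k<d. (((\<Sum>l<d. A i l * B l k) mod p) * v k) mod p) mod p"
      by (simp add: mod_sum_eq)
    also have "\<dots> = (\<Sum>k<d. ((\<Sum>l<d. A i l * B l k) * v k) mod p) mod p" by (simp add: mod_mult_left_eq)
    also have "\<dots> = (\<Sum>k<d. \<Sum>l<d. A i l * B l k * v k) mod p" by (simp add: mod_sum_eq sum_distrib_right)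
    also have "\<dots> = (\<Sum>l<d. \<Sum>k<d. A i l * (B l k * v k)) mod p" by (subst sum.swap) (simp add: mult.assoc)
    also have "\<dots> = (\<Sum>l<d. (A i l * (\<Sum>k<d. B l k * v k)) mod p) mod p" by (simp add: mod_sum_eq sum_distrib_left)
    also have "\<dots> = (\<Sum>l<d. (A i l * ((\<Sum>k<d. B l k * v k) mod p)) mod p) mod p" by (simp add: mod_mult_right_eq)
    also have "\<dots> = (\<Sum>l<d. A i l * ((\<Sum>k<d. B l k * v k) mod p)) mod p" by (simp add: mod_sum_eq)
    finally show ?thesis .
  qed
  moreover have "(\<Sum>k<d. f k * (if k < d then g k else 0)) = (\<Sum>k<d. f k * g k)" for f g :: "nat \<Rightarrow> int"
    by (rule sum.cong) auto
  moreover have "(\<Sum>k<d. (if i < d \<and> k < d then g k else 0) * f k) = (if i < d then (\<Sum>k<d. g k * f k) else 0)" for f g :: "nat \<Rightarrow> int" and i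
    by (auto intro: sum.cong)
  ultimately show ?thesis by (auto simp: fmat_act_def fmat_mult_def intro!: ext)
qed

lemma fmat_act_one: "v \<in> fvecs p d \<Longrightarrow> fmat_act p d (fmat_one d) v = v"
proof (rule ext)
  fix i assume v: "v \<in> fvecs p d"
  show "fmat_act p d (fmat_one d) v i = v i"
  proof (cases "i < d")
    case True
    have "(\<Sum>k<d. fmat_one d i k * v k) = (\<Sum>k\<in>{i}. v k)"
      by (rule sum.mono_neutral_cong_right) (use True in \<open>auto simp: fmat_one_def\<close>)
    thus ?thesis using True fvecs_mod[OF v] by (simp add: fmat_act_def)
  next
    case False thus ?thesis using v by (simp add: fmat_act_def fvecsD)
  qed
qed

lemma fmat_act_zero: "fmat_act p d A fvec_zero = fvec_zero"
  by (auto simp: fmat_act_def fvec_zero_def intro!: ext)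

definition evec :: "nat \<Rightarrow> nat \<Rightarrow> int" where "evec j = (\<lambda>i. if i = j then 1 else 0)"

lemma evec_mem: "1 < p \<Longrightarrow> j < d \<Longrightarrow> evec j \<in> fvecs p d"
  by (auto simp: fvecs_def evec_def)

lemma fmat_act_evec: "A \<in> fmats p d \<Longrightarrow> j < d \<Longrightarrow> fmat_act p d A (evec j) i = A i j"
proof -
  assume A: "A \<in> fmats p d" and j: "j < d"
  have "(\<Sum>k<d. A i k * evec j k) = (\<Sum>k\<in>{j}. A i k)"
    by (rule sum.mono_neutral_cong_right) (use j in \<open>auto simp: evec_def\<close>)
  thus ?thesis using A j by (auto simp: fmat_act_def fmatsD)
qed

lemma fmat_eqI:
  assumes "1 < p" "A \<in> fmats p d" "B \<in> fmats p d" "\<And>v. v \<in> fvecs p d \<Longrightarrow> fmat_act p d A v = fmat_act p d B v"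
  shows "A = B"
proof (intro ext)
  fix i j show "A i j = B i j"
  proof (cases "j < d")
    case True
    thus ?thesis using assms(4)[OF evec_mem[OF assms(1) True]] fmat_act_evec[OF assms(2) True, of i]
       fmat_act_evec[OF assms(3) True, of i] by simp
  next
    case False thus ?thesis using assms by (simp add: fmatsD)
  qed
qed




definition smul :: "int \<Rightarrow> int \<Rightarrow> (nat \<Rightarrow> int) \<Rightarrow> (nat \<Rightarrow> int)" where
  "smul p c v = (\<lambda>i. (c * v i) mod p)"

lemma smul_closed: "0 < p \<Longrightarrow> v \<in> fvecs p d \<Longrightarrow> smul p c v \<in> fvecs p d"
  by (auto simp: fvecs_def smul_def)

lemma smul_0: "smul p 0 v = fvec_zero"
  by (auto simp: smul_def fvec_zero_def)

lemma smul_Suc: "v \<in> fvecs p d \<Longrightarrow> smul p (int (Suc n)) v = fvec_add p d (smul p (int n) v) v"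
  by (auto simp: smul_def fvec_add_def fvecsD mod_simps distrib_right add.commute intro!: ext)

lemma smul_p: "smul p p v = fvec_zero"
  by (auto simp: smul_def fvec_zero_def)

lemma additive_zero:
  assumes "0 < p" "\<And>v. v \<in> fvecs p d \<Longrightarrow> T v \<in> fvecs p d"
    "\<And>v w. v \<in> fvecs p d \<Longrightarrow> w \<in> fvecs p d \<Longrightarrow> T (fvec_add p d v w) = fvec_add p d (T v) (T w)"
  shows "T fvec_zero = fvec_zero"
proof -
  have z: "fvec_zero \<in> fvecs p d" using assms(1) by (rule fvec_zero_mem)
  have "fvec_add p d (T fvec_zero) (T fvec_zero) = fvec_add p d (T fvec_zero) fvec_zero"
  proof -
    have "fvec_add p d (T fvec_zero) (T fvec_zero) = T (fvec_add p d fvec_zero fvec_zero)"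
      using assms(3)[OF z z] by (rule sym)
    also have "\<dots> = T fvec_zero" using fvec_add_zero(1)[OF z] by simp
    also have "\<dots> = fvec_add p d (T fvec_zero) fvec_zero" using fvec_add_zero(2)[OF assms(2)[OF z]] by simp
    finally show ?thesis .
  qed
  thus ?thesis using fvec_add_cancel assms(2)[OF z] z by blast
qed

lemma additive_smul:
  assumes "0 < p" "\<And>v. v \<in> fvecs p d \<Longrightarrow> T v \<in> fvecs p d"
    "\<And>v w. v \<in> fvecs p d \<Longrightarrow> w \<in> fvecs p d \<Longrightarrow> T (fvec_add p d v w) = fvec_add p d (T v) (T w)"
    "v \<in> fvecs p d"
  shows "T (smul p (int n) v) = smul p (int n) (T v)"
proof (induction n)
  case 0 thus ?case using additive_zero[of p d T, OF assms(1-3)] by (simp add: smul_0)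
next
  case (Suc n)
  have "T (smul p (int (Suc n)) v) = T (fvec_add p d (smul p (int n) v) v)" using smul_Suc[OF assms(4)] by simp
  also have "\<dots> = fvec_add p d (T (smul p (int n) v)) (T v)" using assms(3)[OF smul_closed[OF assms(1,4)] assms(4)] .
  also have "\<dots> = smul p (int (Suc n)) (T v)" using Suc smul_Suc[OF assms(2)[OF assms(4)]] by simp
  finally show ?case .
qed

definition trunc :: "nat \<Rightarrow> (nat \<Rightarrow> int) \<Rightarrow> (nat \<Rightarrow> int)" where
  "trunc n v = (\<lambda>i. if i < n then v i else 0)"

lemma trunc_closed: "v \<in> fvecs p d \<Longrightarrow> trunc n v \<in> fvecs p d"
  by (auto simp: fvecs_def trunc_def)

lemma trunc_Suc: "1 < p \<Longrightarrow> v \<in> fvecs p d \<Longrightarrow> n < d \<Longrightarrow>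
   trunc (Suc n) v = fvec_add p d (trunc n v) (smul p (v n) (evec n))"
  by (auto simp: trunc_def fvec_add_def smul_def evec_def fvecsD fvecs_mod less_Suc_eq intro!: ext)

lemma trunc_d: "v \<in> fvecs p d \<Longrightarrow> trunc d v = v"
  by (auto simp: trunc_def fvecsD intro!: ext)

lemma additive_matrix:
  assumes p: "1 < p" and Tc: "\<And>v. v \<in> fvecs p d \<Longrightarrow> T v \<in> fvecs p d"
    and Ta: "\<And>v w. v \<in> fvecs p d \<Longrightarrow> w \<in> fvecs p d \<Longrightarrow> T (fvec_add p d v w) = fvec_add p d (T v) (T w)"
  shows "\<exists>M \<in> fmats p d. \<forall>v \<in> fvecs p d. fmat_act p d M v = T v"
proof -
  define M where "M = (\<lambda>i j. if i < d \<and> j < d then T (evec j) i else 0)"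
  have Mm: "M \<in> fmats p d"
  proof -
    have "0 \<le> T (evec j) i \<and> T (evec j) i < p" if "j < d" for i j
      using fvecsD(1)[OF Tc[OF evec_mem[OF p that]]] .
    thus ?thesis using p by (auto simp: M_def fmats_def)
  qed
  have main: "n \<le> d \<Longrightarrow> T (trunc n v) i = (if i < d then (\<Sum>j<n. M i j * v j) mod p else 0)"
    if v: "v \<in> fvecs p d" for v n i
  proof (induction n)
    case 0
    have "trunc 0 v = fvec_zero" by (auto simp: trunc_def fvec_zero_def)
    thus ?case using additive_zero[of p d T, OF _ Tc Ta] p by (simp add: fvec_zero_def)
  next
    case (Suc n)
    hence n: "n < d" by simp
    have vn: "v n = int (nat (v n))" using fvecsD[OF v] by simp
    have e: "evec n \<in> fvecs p d" using evec_mem[OF p n] .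
    have "T (trunc (Suc n) v) = fvec_add p d (T (trunc n v)) (T (smul p (v n) (evec n)))"
      using trunc_Suc[OF p v n] Ta[OF trunc_closed[OF v] smul_closed[OF _ e]] p by simp
    also have "T (smul p (v n) (evec n)) = smul p (v n) (T (evec n))"
      using additive_smul[of p d T "evec n" "nat (v n)", OF _ Tc Ta e] p vn by simp
    finally show ?case using Suc n
      by (auto simp: fvec_add_def smul_def M_def mod_simps mult.commute)
  qed
  have "fmat_act p d M v = T v" if v: "v \<in> fvecs p d" for v
  proof
    fix i
    have "T v i = (if i < d then (\<Sum>j<d. M i j * v j) mod p else 0)"
      using main[OF v, of d i] trunc_d[OF v] by simp
    thus "fmat_act p d M v i = T v i" by (simp add: fmat_act_def)
  qed
  thus ?thesis using Mm by blast
qed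




lemma GL_carrier: "A \<in> carrier (GL p d) \<longleftrightarrow> A \<in> fmats p d \<and> (\<exists>B \<in> fmats p d.
                  fmat_mult p d A B = fmat_one d \<and> fmat_mult p d B A = fmat_one d)"
  by (simp add: GL_def)

lemma GL_mult: "A \<otimes>\<^bsub>GL p d\<^esub> B = fmat_mult p d A B"
  by (simp add: GL_def)

lemma psi_mem: "psi \<in> hom D (GL p d) \<Longrightarrow> g \<in> carrier D \<Longrightarrow> psi g \<in> fmats p d"
  using GL_carrier hom_in_carrier by metis

lemma psi_mult: "psi \<in> hom D (GL p d) \<Longrightarrow> g \<in> carrier D \<Longrightarrow> h \<in> carrier D \<Longrightarrow>
   psi (g \<otimes>\<^bsub>D\<^esub> h) = fmat_mult p d (psi g) (psi h)"
  using hom_mult[of psi D "GL p d" g h] by (simp add: GL_mult)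

lemma psi_act_mult: "psi \<in> hom D (GL p d) \<Longrightarrow> g \<in> carrier D \<Longrightarrow> h \<in> carrier D \<Longrightarrow>
   fmat_act p d (psi (g \<otimes>\<^bsub>D\<^esub> h)) v = fmat_act p d (psi g) (fmat_act p d (psi h) v)"
  by (simp add: psi_mult fmat_act_mult)

lemma psi_one_act:
  assumes p: "1 < p" and D: "group D" and psi: "psi \<in> hom D (GL p d)" and v: "v \<in> fvecs p d"
  shows "fmat_act p d (psi \<one>\<^bsub>D\<^esub>) v = v"
proof -
  define A where "A = psi \<one>\<^bsub>D\<^esub>"
  have one: "\<one>\<^bsub>D\<^esub> \<in> carrier D" using D by (simp add: group.is_monoid monoid.one_closed)
  have AA: "A = fmat_mult p d A A"
    using psi_mult[OF psi one one] D by (simp add: A_def group.is_monoid monoid.l_one[OF _ one])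
  obtain B where B: "B \<in> fmats p d" "fmat_mult p d B A = fmat_one d"
    using hom_in_carrier[OF psi one] by (auto simp: GL_carrier A_def)
  define u where "u = fmat_act p d A v"
  have uf: "u \<in> fvecs p d" using p by (simp add: u_def fmat_act_closed)
  have "fmat_act p d A u = u" unfolding u_def
    by (metis AA fmat_act_mult)
  hence "fmat_act p d B (fmat_act p d A u) = fmat_act p d B u" by simp
  hence "u = fmat_act p d B u" using B(2) fmat_act_mult[of p d B A u] fmat_act_one[OF uf] by simp
  also have "\<dots> = v" using B(2) fmat_act_mult[of p d B A v] fmat_act_one[OF v] by (simp add: u_def)
  finally show ?thesis by (simp add: u_def A_def)
qed

lemma sd_carrier: "carrier (semidirect p d D psi) = fvecs p d \<times> carrier D"
  by (simp add: semidirect_def)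

lemma sd_mult: "(v, g) \<otimes>\<^bsub>semidirect p d D psi\<^esub> (w, h) = (fvec_add p d v (fmat_act p d (psi g) w), g \<otimes>\<^bsub>D\<^esub> h)"
  by (simp add: semidirect_def)

lemma sd_one: "\<one>\<^bsub>semidirect p d D psi\<^esub> = (fvec_zero, \<one>\<^bsub>D\<^esub>)"
  by (simp add: semidirect_def)

lemma sd_group:
  assumes p: "1 < p" and D: "group D" and psi: "psi \<in> hom D (GL p d)"
  shows "group (semidirect p d D psi)"
proof (rule groupI)
  have p0: "0 < p" using p by simp
  interpret D: group D by (rule D)
  show "x \<otimes>\<^bsub>semidirect p d D psi\<^esub> y \<in> carrier (semidirect p d D psi)"
    if "x \<in> carrier (semidirect p d D psi)" "y \<in> carrier (semidirect p d D psi)" for x y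
    using that p0 by (auto simp: sd_carrier sd_mult fvec_add_closed)
  show "\<one>\<^bsub>semidirect p d D psi\<^esub> \<in> carrier (semidirect p d D psi)"
    using p0 by (simp add: sd_carrier sd_one fvec_zero_mem)
  show "x \<otimes>\<^bsub>semidirect p d D psi\<^esub> y \<otimes>\<^bsub>semidirect p d D psi\<^esub> z =
        x \<otimes>\<^bsub>semidirect p d D psi\<^esub> (y \<otimes>\<^bsub>semidirect p d D psi\<^esub> z)"
    if "x \<in> carrier (semidirect p d D psi)" "y \<in> carrier (semidirect p d D psi)"
       "z \<in> carrier (semidirect p d D psi)" for x y z
  proof -
    obtain u g v h w k where xyz: "x = (u, g)" "y = (v, h)" "z = (w, k)" by (cases x, cases y, cases z) auto
    have g: "g \<in> carrier D" and h: "h \<in> carrier D" and k: "k \<in> carrier D"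
      using that xyz by (auto simp: sd_carrier)
    show ?thesis using psi_act_mult[OF psi g h, of w]
      by (simp add: xyz sd_mult fmat_act_add fvec_add_assoc D.m_assoc g h k)
  qed
  show "\<one>\<^bsub>semidirect p d D psi\<^esub> \<otimes>\<^bsub>semidirect p d D psi\<^esub> x = x"
    if "x \<in> carrier (semidirect p d D psi)" for x
  proof -
    obtain v g where x: "x = (v, g)" by (cases x)
    have v: "v \<in> fvecs p d" and g: "g \<in> carrier D" using that x by (auto simp: sd_carrier)
    show ?thesis using psi_one_act[OF p D psi v] fvec_add_zero(1)[OF v] g
      by (simp add: x sd_one sd_mult)
  qed
  show "\<exists>y\<in>carrier (semidirect p d D psi). y \<otimes>\<^bsub>semidirect p d D psi\<^esub> x = \<one>\<^bsub>semidirect p d D psi\<^esub>"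
    if "x \<in> carrier (semidirect p d D psi)" for x
  proof -
    obtain v g where x: "x = (v, g)" by (cases x)
    have v: "v \<in> fvecs p d" and g: "g \<in> carrier D" using that x by (auto simp: sd_carrier)
    define w where "w = fmat_act p d (psi (inv\<^bsub>D\<^esub> g)) v"
    have w: "w \<in> fvecs p d" using p0 by (simp add: w_def fmat_act_closed)
    have "(fvec_neg p w, inv\<^bsub>D\<^esub> g) \<otimes>\<^bsub>semidirect p d D psi\<^esub> x = \<one>\<^bsub>semidirect p d D psi\<^esub>"
      using fvec_neg_add[OF w] g by (simp add: x sd_mult sd_one w_def)
    moreover have "(fvec_neg p w, inv\<^bsub>D\<^esub> g) \<in> carrier (semidirect p d D psi)"
      using fvec_neg_closed[OF p0 w] g by (simp add: sd_carrier)
    ultimately show ?thesis by blast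
  qed
qed

lemma fvecs_Suc: assumes p: "0 < p" shows "fvecs p (Suc d) = (\<lambda>(v, c). v(d := c)) ` (fvecs p d \<times> {0..<p})"
proof (intro equalityI subsetI)
  fix x assume x: "x \<in> fvecs p (Suc d)"
  have "x = (\<lambda>(v, c). v(d := c)) (x(d := 0), x d)" by simp
  moreover have "(x(d := 0), x d) \<in> fvecs p d \<times> {0..<p}"
    using x p by (auto simp: fvecs_def)
  ultimately show "x \<in> (\<lambda>(v, c). v(d := c)) ` (fvecs p d \<times> {0..<p})" by blast
next
  fix x assume x: "x \<in> (\<lambda>(v, c). v(d := c)) ` (fvecs p d \<times> {0..<p})"
  thus "x \<in> fvecs p (Suc d)" by (auto simp: fvecs_def)
qed

lemma fvecs_card: "0 < p \<Longrightarrow> finite (fvecs p d) \<and> card (fvecs p d) = nat p ^ d"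
proof (induction d)
  case 0
  have "fvecs p 0 = {fvec_zero}" using 0 by (auto simp: fvecs_def fvec_zero_def)
  thus ?case by simp
next
  case (Suc d)
  have inj: "inj_on (\<lambda>(v, c). v(d := c)) (fvecs p d \<times> {0..<p})"
  proof (rule inj_onI, clarify)
    fix v c w e assume "v \<in> fvecs p d" "w \<in> fvecs p d" "v(d := c) = w(d := e)"
    thus "v = w \<and> c = e" by (metis fun_upd_idem fun_upd_same fun_upd_upd fvecsD(2) order_refl)
  qed
  have "card (fvecs p (Suc d)) = card (fvecs p d \<times> {0..<p})"
    using fvecs_Suc[OF Suc.prems] card_image[OF inj] by simp
  also have "\<dots> = nat p ^ Suc d" using Suc by (simp add: card_cartesian_product)
  finally show ?case using fvecs_Suc[OF Suc.prems] Suc by simp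
qed




lemma sd_mult_pair: "x \<otimes>\<^bsub>semidirect p d D psi\<^esub> y =
   (fvec_add p d (fst x) (fmat_act p d (psi (snd x)) (fst y)), snd x \<otimes>\<^bsub>D\<^esub> snd y)"
  by (cases x, cases y) (simp add: sd_mult)

lemma sd_pow_snd: "snd (x [^]\<^bsub>semidirect p d D psi\<^esub> (n::nat)) = snd x [^]\<^bsub>D\<^esub> n"
proof (induction n)
  case 0 thus ?case by (simp add: sd_one)
next
  case (Suc n) thus ?case by (simp add: sd_mult_pair)
qed

lemma sd_pow_V:
  assumes p: "1 < p" and D: "group D" and psi: "psi \<in> hom D (GL p d)" and v: "v \<in> fvecs p d"
  shows "(v, \<one>\<^bsub>D\<^esub>) [^]\<^bsub>semidirect p d D psi\<^esub> (n::nat) = (smul p (int n) v, \<one>\<^bsub>D\<^esub>)"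
proof (induction n)
  case 0 thus ?case by (simp add: sd_one smul_0)
next
  case (Suc n)
  have one: "\<one>\<^bsub>D\<^esub> \<in> carrier D" using D by (simp add: group.is_monoid monoid.one_closed)
  have "(v, \<one>\<^bsub>D\<^esub>) [^]\<^bsub>semidirect p d D psi\<^esub> Suc n
     = (fvec_add p d (smul p (int n) v) (fmat_act p d (psi \<one>\<^bsub>D\<^esub>) v), \<one>\<^bsub>D\<^esub> \<otimes>\<^bsub>D\<^esub> \<one>\<^bsub>D\<^esub>)"
    using Suc by (simp add: sd_mult)
  also have "\<dots> = (smul p (int (Suc n)) v, \<one>\<^bsub>D\<^esub>)"
    using psi_one_act[OF p D psi v] smul_Suc[OF v, of n] one D
    by (simp add: group.is_monoid monoid.l_one)
  finally show ?case .
qed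

lemma V_char:
  assumes pp: "Factorial_Ring.prime p" and D: "group D" and psi: "psi \<in> hom D (GL p d)"
    and nd: "\<not> p dvd int (order D)" and x: "x \<in> carrier (semidirect p d D psi)"
  shows "x [^]\<^bsub>semidirect p d D psi\<^esub> (nat p) = \<one>\<^bsub>semidirect p d D psi\<^esub> \<longleftrightarrow> snd x = \<one>\<^bsub>D\<^esub>"
proof
  have p: "1 < p" using pp by (simp add: prime_gt_1_int)
  have np: "Factorial_Ring.prime (nat p)" using pp p by (metis prime_int_nat_transfer int_nat_eq less_trans zero_less_one order.strict_implies_order)
  assume "x [^]\<^bsub>semidirect p d D psi\<^esub> (nat p) = \<one>\<^bsub>semidirect p d D psi\<^esub>"
  hence "snd x [^]\<^bsub>D\<^esub> (nat p) = \<one>\<^bsub>D\<^esub>" using sd_pow_snd[of p d D psi x "nat p"] by (simp add: sd_one)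
  moreover have g: "snd x \<in> carrier D" using x by (auto simp: sd_carrier)
  ultimately have "group.ord D (snd x) dvd nat p" using group.pow_eq_id[OF D g] by simp
  hence "group.ord D (snd x) = 1 \<or> group.ord D (snd x) = nat p" using np by (simp add: prime_nat_iff)
  moreover have "group.ord D (snd x) dvd order D" using group.ord_dvd_group_order[OF D g] .
  ultimately have "group.ord D (snd x) = 1" using nd p
    by (metis int_dvd_int_iff int_nat_eq less_trans zero_less_one order.strict_implies_order)
  thus "snd x = \<one>\<^bsub>D\<^esub>" using group.ord_eq_1[OF D g] by simp
next
  have p: "1 < p" using pp by (simp add: prime_gt_1_int)
  assume s: "snd x = \<one>\<^bsub>D\<^esub>"
  obtain v where xv: "x = (v, \<one>\<^bsub>D\<^esub>)" and v: "v \<in> fvecs p d" using x s by (cases x) (auto simp: sd_carrier)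
  show "x [^]\<^bsub>semidirect p d D psi\<^esub> (nat p) = \<one>\<^bsub>semidirect p d D psi\<^esub>"
    using sd_pow_V[OF p D psi v, of "nat p"] p by (simp add: xv smul_p sd_one)
qed




lemma V_preserve:
  assumes pp: "Factorial_Ring.prime p"
    and D1: "group D1" and D2: "group D2"
    and psi1: "psi1 \<in> hom D1 (GL p d1)" and psi2: "psi2 \<in> hom D2 (GL p d2)"
    and nd1: "\<not> p dvd int (order D1)" and nd2: "\<not> p dvd int (order D2)"
    and f: "f \<in> iso (semidirect p d1 D1 psi1) (semidirect p d2 D2 psi2)"
    and x: "x \<in> carrier (semidirect p d1 D1 psi1)"
  shows "snd (f x) = \<one>\<^bsub>D2\<^esub> \<longleftrightarrow> snd x = \<one>\<^bsub>D1\<^esub>"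
proof -
  have p: "1 < p" using pp by (simp add: prime_gt_1_int)
  let ?G1 = "semidirect p d1 D1 psi1" and ?G2 = "semidirect p d2 D2 psi2"
  have G1: "group ?G1" by (rule sd_group[OF p D1 psi1])
  have G2: "group ?G2" by (rule sd_group[OF p D2 psi2])
  have fh: "f \<in> hom ?G1 ?G2" and fi: "inj_on f (carrier ?G1)" using f by (auto simp: iso_iff)
  have fx: "f x \<in> carrier ?G2" using hom_in_carrier[OF fh x] .
  have one1: "\<one>\<^bsub>?G1\<^esub> \<in> carrier ?G1" using G1 by (simp add: group.is_monoid monoid.one_closed)
  have powc: "x [^]\<^bsub>?G1\<^esub> (nat p) \<in> carrier ?G1" using G1 x by (simp add: group.is_monoid monoid.nat_pow_closed)
  have "snd (f x) = \<one>\<^bsub>D2\<^esub> \<longleftrightarrow> f x [^]\<^bsub>?G2\<^esub> (nat p) = \<one>\<^bsub>?G2\<^esub>"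
    using V_char[OF pp D2 psi2 nd2 fx] by simp
  also have "\<dots> \<longleftrightarrow> f (x [^]\<^bsub>?G1\<^esub> (nat p)) = f \<one>\<^bsub>?G1\<^esub>"
    using hom_nat_pow[OF fh x G1 G2, of "nat p"] hom_one[OF fh G1 G2] by simp
  also have "\<dots> \<longleftrightarrow> x [^]\<^bsub>?G1\<^esub> (nat p) = \<one>\<^bsub>?G1\<^esub>"
    using inj_on_eq_iff[OF fi powc one1] .
  also have "\<dots> \<longleftrightarrow> snd x = \<one>\<^bsub>D1\<^esub>" using V_char[OF pp D1 psi1 nd1 x] .
  finally show ?thesis .
qed

lemma backward:
  assumes p: "1 < p" and D1: "group D1" and D2: "group D2"
    and psi1: "psi1 \<in> hom D1 (GL p d1)" and psi2: "psi2 \<in> hom D2 (GL p d2)"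
    and sigma: "\<sigma> \<in> iso D1 D2" and re: "rep_equiv D1 p d1 d2 psi1 (psi2 \<circ> \<sigma>)"
  shows "\<exists>f \<in> iso (semidirect p d1 D1 psi1) (semidirect p d2 D2 psi2).
              f ` complement D1 = complement D2 \<and>
              (\<forall>g \<in> carrier D1. f (fvec_zero, g) = (fvec_zero, \<sigma> g))"
proof -
  have p0: "0 < p" using p by simp
  have dd: "d2 = d1" using re by (simp add: rep_equiv_def)
  obtain T where T: "T \<in> carrier (GL p d1)"
    and Teq: "\<And>g. g \<in> carrier D1 \<Longrightarrow> fmat_mult p d1 T (psi1 g) = fmat_mult p d1 (psi2 (\<sigma> g)) T"
    using re by (auto simp: rep_equiv_def)
  obtain B where Tm: "T \<in> fmats p d1" and B: "B \<in> fmats p d1" "fmat_mult p d1 T B = fmat_one d1"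
    "fmat_mult p d1 B T = fmat_one d1" using T by (auto simp: GL_carrier)
  have sh: "\<sigma> \<in> hom D1 D2" and sb: "bij_betw \<sigma> (carrier D1) (carrier D2)" using sigma by (auto simp: iso_def)
  define f where "f = map_prod (fmat_act p d1 T) \<sigma>"
  have Tb: "bij_betw (fmat_act p d1 T) (fvecs p d1) (fvecs p d1)"
  proof (rule bij_betw_byWitness[where f' = "fmat_act p d1 B"])
    show "\<forall>a\<in>fvecs p d1. fmat_act p d1 B (fmat_act p d1 T a) = a"
      using B(3) by (simp add: fmat_act_mult[symmetric] fmat_act_one)
    show "\<forall>a\<in>fvecs p d1. fmat_act p d1 T (fmat_act p d1 B a) = a"
      using B(2) by (simp add: fmat_act_mult[symmetric] fmat_act_one)
  qed (use p0 fmat_act_closed in auto)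
  have fb: "bij_betw f (carrier (semidirect p d1 D1 psi1)) (carrier (semidirect p d2 D2 psi2))"
    unfolding f_def sd_carrier dd by (rule bij_betw_map_prod[OF Tb sb])
  have fh: "f \<in> hom (semidirect p d1 D1 psi1) (semidirect p d2 D2 psi2)"
  proof (rule homI)
    show "f x \<in> carrier (semidirect p d2 D2 psi2)" if "x \<in> carrier (semidirect p d1 D1 psi1)" for x
      using bij_betwE[OF fb] that by blast
    show "f (x \<otimes>\<^bsub>semidirect p d1 D1 psi1\<^esub> y) = f x \<otimes>\<^bsub>semidirect p d2 D2 psi2\<^esub> f y"
      if "x \<in> carrier (semidirect p d1 D1 psi1)" "y \<in> carrier (semidirect p d1 D1 psi1)" for x y
    proof -
      obtain v g w h where xy: "x = (v, g)" "y = (w, h)" by (cases x, cases y) auto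
      have g: "g \<in> carrier D1" and h: "h \<in> carrier D1" using that xy by (auto simp: sd_carrier)
      have "fmat_act p d1 T (fmat_act p d1 (psi1 g) w) = fmat_act p d1 (psi2 (\<sigma> g)) (fmat_act p d1 T w)"
        using Teq[OF g] by (metis fmat_act_mult)
      thus ?thesis using hom_mult[OF sh g h]
        by (simp add: xy f_def sd_mult fmat_act_add dd)
    qed
  qed
  have fi: "f \<in> iso (semidirect p d1 D1 psi1) (semidirect p d2 D2 psi2)"
    using fh fb by (simp add: iso_def)
  have fz: "f (fvec_zero, g) = (fvec_zero, \<sigma> g)" for g
    by (simp add: f_def fmat_act_zero)
  have "f ` complement D1 = complement D2"
  proof -
    have "f ` complement D1 = (\<lambda>g. (fvec_zero, \<sigma> g)) ` carrier D1"
      by (auto simp: complement_def fz image_iff)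
    also have "\<dots> = {fvec_zero} \<times> (\<sigma> ` carrier D1)" by auto
    finally show ?thesis using bij_betw_imp_surj_on[OF sb] by (simp add: complement_def)
  qed
  thus ?thesis using fi fz by blast
qed


lemma forward:
  assumes pp: "Factorial_Ring.prime p"
    and D1: "group D1" and D2: "group D2"
    and psi1: "psi1 \<in> hom D1 (GL p d1)" and psi2: "psi2 \<in> hom D2 (GL p d2)"
    and nd1: "\<not> p dvd int (order D1)" and nd2: "\<not> p dvd int (order D2)"
    and f: "f \<in> iso (semidirect p d1 D1 psi1) (semidirect p d2 D2 psi2)"
  shows "\<exists>\<sigma>. \<sigma> \<in> iso D1 D2 \<and> rep_equiv D1 p d1 d2 psi1 (psi2 \<circ> \<sigma>)"
proof -
  have p: "1 < p" using pp by (simp add: prime_gt_1_int)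
  have p0: "0 < p" using p by simp
  let ?G1 = "semidirect p d1 D1 psi1" and ?G2 = "semidirect p d2 D2 psi2"
  have G1: "group ?G1" by (rule sd_group[OF p D1 psi1])
  have G2: "group ?G2" by (rule sd_group[OF p D2 psi2])
  interpret D1: group D1 by (rule D1)
  interpret D2: group D2 by (rule D2)
  have fh: "f \<in> hom ?G1 ?G2" and fi: "inj_on f (carrier ?G1)" and fs: "f ` carrier ?G1 = carrier ?G2"
    using f by (auto simp: iso_iff)
  have fm: "f (x \<otimes>\<^bsub>?G1\<^esub> y) = f x \<otimes>\<^bsub>?G2\<^esub> f y" if "x \<in> carrier ?G1" "y \<in> carrier ?G1" for x y
    using hom_mult[OF fh that] .
  have fc: "f x \<in> carrier ?G2" if "x \<in> carrier ?G1" for x using hom_in_carrier[OF fh that] .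
  have VP: "snd (f x) = \<one>\<^bsub>D2\<^esub> \<longleftrightarrow> snd x = \<one>\<^bsub>D1\<^esub>" if "x \<in> carrier ?G1" for x
    using V_preserve[OF pp D1 D2 psi1 psi2 nd1 nd2 f that] .
  define T where "T = (\<lambda>v. fst (f (v, \<one>\<^bsub>D1\<^esub>)))"
  have v1c: "(v, \<one>\<^bsub>D1\<^esub>) \<in> carrier ?G1" if "v \<in> fvecs p d1" for v
    using that by (simp add: sd_carrier)
  have fV: "f (v, \<one>\<^bsub>D1\<^esub>) = (T v, \<one>\<^bsub>D2\<^esub>) \<and> T v \<in> fvecs p d2" if v: "v \<in> fvecs p d1" for v
  proof -
    have "snd (f (v, \<one>\<^bsub>D1\<^esub>)) = \<one>\<^bsub>D2\<^esub>" using VP[OF v1c[OF v]] by simp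
    moreover have "f (v, \<one>\<^bsub>D1\<^esub>) \<in> fvecs p d2 \<times> carrier D2" using fc[OF v1c[OF v]] by (simp add: sd_carrier)
    ultimately show ?thesis unfolding T_def by (metis mem_Times_iff prod.collapse)
  qed
  have Tinj: "inj_on T (fvecs p d1)"
  proof (rule inj_onI)
    fix v w assume v: "v \<in> fvecs p d1" and w: "w \<in> fvecs p d1" and "T v = T w"
    hence "f (v, \<one>\<^bsub>D1\<^esub>) = f (w, \<one>\<^bsub>D1\<^esub>)" using fV by simp
    thus "v = w" using inj_onD[OF fi _ v1c[OF v] v1c[OF w]] by simp
  qed
  have Tsurj: "T ` fvecs p d1 = fvecs p d2"
  proof (intro equalityI subsetI)
    fix y assume "y \<in> T ` fvecs p d1" thus "y \<in> fvecs p d2" using fV by auto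
  next
    fix w assume w: "w \<in> fvecs p d2"
    have "(w, \<one>\<^bsub>D2\<^esub>) \<in> carrier ?G2" using w by (simp add: sd_carrier)
    then obtain x where x: "x \<in> carrier ?G1" and fx: "f x = (w, \<one>\<^bsub>D2\<^esub>)" using fs by (metis imageE)
    have "snd x = \<one>\<^bsub>D1\<^esub>" using VP[OF x] fx by simp
    then obtain v where xv: "x = (v, \<one>\<^bsub>D1\<^esub>)" and v: "v \<in> fvecs p d1"
      using x by (cases x) (auto simp: sd_carrier)
    have "T v = w" using fV[OF v] fx xv by simp
    thus "w \<in> T ` fvecs p d1" using v by blast
  qed
  have "card (fvecs p d1) = card (fvecs p d2)" using card_image[OF Tinj] Tsurj by simp
  hence "nat p ^ d1 = nat p ^ d2" using fvecs_card[OF p0, of d1] fvecs_card[OF p0, of d2] by simp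
  hence dd: "d2 = d1" using p by (simp add: power_inject_exp)
  have Tc: "T v \<in> fvecs p d1" if "v \<in> fvecs p d1" for v using fV[OF that] dd by simp
  have Ta: "T (fvec_add p d1 v w) = fvec_add p d1 (T v) (T w)" if v: "v \<in> fvecs p d1" and w: "w \<in> fvecs p d1" for v w
  proof -
    have "(v, \<one>\<^bsub>D1\<^esub>) \<otimes>\<^bsub>?G1\<^esub> (w, \<one>\<^bsub>D1\<^esub>) = (fvec_add p d1 v w, \<one>\<^bsub>D1\<^esub>)"
      using psi_one_act[OF p D1 psi1 w] by (simp add: sd_mult)
    hence "f (fvec_add p d1 v w, \<one>\<^bsub>D1\<^esub>) = f (v, \<one>\<^bsub>D1\<^esub>) \<otimes>\<^bsub>?G2\<^esub> f (w, \<one>\<^bsub>D1\<^esub>)"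
      using fm[OF v1c[OF v] v1c[OF w]] by simp
    also have "\<dots> = (fvec_add p d1 (T v) (T w), \<one>\<^bsub>D2\<^esub>)"
      using fV[OF v] fV[OF w] psi_one_act[OF p D2 psi2, of "T w"] dd by (simp add: sd_mult)
    finally show ?thesis using fV[OF fvec_add_closed[OF p0, of d1 v w]] by simp
  qed
  obtain M where M: "M \<in> fmats p d1" and Mact: "\<And>v. v \<in> fvecs p d1 \<Longrightarrow> fmat_act p d1 M v = T v"
    using additive_matrix[of p d1 T, OF p Tc Ta] by blast
  define S where "S = inv_into (fvecs p d1) T"
  have Tb: "bij_betw T (fvecs p d1) (fvecs p d1)" using Tinj Tsurj dd by (simp add: bij_betw_def)
  have Sc: "S v \<in> fvecs p d1" if "v \<in> fvecs p d1" for v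
    using that Tsurj dd by (simp add: S_def inv_into_into)
  have TS: "T (S v) = v" if "v \<in> fvecs p d1" for v
    using that Tsurj dd by (simp add: S_def f_inv_into_f)
  have ST: "S (T v) = v" if "v \<in> fvecs p d1" for v
    using that Tinj by (simp add: S_def inv_into_f_f)
  have Sa: "S (fvec_add p d1 v w) = fvec_add p d1 (S v) (S w)" if v: "v \<in> fvecs p d1" and w: "w \<in> fvecs p d1" for v w
  proof -
    have "fvec_add p d1 v w = T (fvec_add p d1 (S v) (S w))" using Ta[OF Sc[OF v] Sc[OF w]] TS[OF v] TS[OF w] by simp
    thus ?thesis using ST[OF fvec_add_closed[OF p0, of d1 "S v" "S w"]] by simp
  qed
  obtain N where N: "N \<in> fmats p d1" and Nact: "\<And>v. v \<in> fvecs p d1 \<Longrightarrow> fmat_act p d1 N v = S v"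
    using additive_matrix[of p d1 S, OF p Sc Sa] by blast
  have MN: "fmat_mult p d1 M N = fmat_one d1"
    by (rule fmat_eqI[OF p fmat_mult_closed[OF p0] fmat_one_mem[OF p]])
       (simp add: fmat_act_mult Nact Mact Sc TS fmat_act_one)
  have NM: "fmat_mult p d1 N M = fmat_one d1"
    by (rule fmat_eqI[OF p fmat_mult_closed[OF p0] fmat_one_mem[OF p]])
       (simp add: fmat_act_mult Nact Mact Tc ST fmat_act_one)
  have MG: "M \<in> carrier (GL p d1)" using M N MN NM by (auto simp: GL_carrier)
  define \<sigma> where "\<sigma> = (\<lambda>g. snd (f (fvec_zero, g)))"
  have z1c: "(fvec_zero, g) \<in> carrier ?G1" if "g \<in> carrier D1" for g
    using that p0 by (simp add: sd_carrier fvec_zero_mem)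
  have fz: "f (fvec_zero, g) = (fst (f (fvec_zero, g)), \<sigma> g) \<and> fst (f (fvec_zero, g)) \<in> fvecs p d1 \<and> \<sigma> g \<in> carrier D2"
    if "g \<in> carrier D1" for g
    using fc[OF z1c[OF that]] dd by (auto simp: \<sigma>_def sd_carrier mem_Times_iff)
  have sh: "\<sigma> \<in> hom D1 D2"
  proof (rule homI)
    show "\<sigma> g \<in> carrier D2" if "g \<in> carrier D1" for g using fz[OF that] by simp
    show "\<sigma> (g \<otimes>\<^bsub>D1\<^esub> h) = \<sigma> g \<otimes>\<^bsub>D2\<^esub> \<sigma> h" if g: "g \<in> carrier D1" and h: "h \<in> carrier D1" for g h
    proof -
      have "(fvec_zero, g) \<otimes>\<^bsub>?G1\<^esub> (fvec_zero, h) = (fvec_zero, g \<otimes>\<^bsub>D1\<^esub> h)"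
        using fvec_add_zero(1)[OF fvec_zero_mem[OF p0, of d1]] by (simp add: sd_mult fmat_act_zero)
      hence "f (fvec_zero, g \<otimes>\<^bsub>D1\<^esub> h) = f (fvec_zero, g) \<otimes>\<^bsub>?G2\<^esub> f (fvec_zero, h)"
        using fm[OF z1c[OF g] z1c[OF h]] by simp
      thus ?thesis unfolding \<sigma>_def by (simp add: sd_mult_pair)
    qed
  qed
  have sgh: "group_hom D1 D2 \<sigma>"
    using sh D1 D2 by (simp add: group_hom_def group_hom_axioms_def)
  have "kernel D1 D2 \<sigma> = {\<one>\<^bsub>D1\<^esub>}"
  proof (intro equalityI subsetI)
    fix g assume "g \<in> kernel D1 D2 \<sigma>"
    hence g: "g \<in> carrier D1" and "\<sigma> g = \<one>\<^bsub>D2\<^esub>" by (auto simp: kernel_def)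
    hence "snd (f (fvec_zero, g)) = \<one>\<^bsub>D2\<^esub>" by (simp add: \<sigma>_def)
    hence "snd (fvec_zero, g) = \<one>\<^bsub>D1\<^esub>" using VP[OF z1c[OF g]] by simp
    thus "g \<in> {\<one>\<^bsub>D1\<^esub>}" by simp
  next
    fix g assume "g \<in> {\<one>\<^bsub>D1\<^esub>}"
    thus "g \<in> kernel D1 D2 \<sigma>" using group_hom.hom_one[OF sgh] by (simp add: kernel_def)
  qed
  hence sinj: "inj_on \<sigma> (carrier D1)" using group_hom.inj_iff_trivial_ker[OF sgh] by simp
  have ssurj: "\<sigma> ` carrier D1 = carrier D2"
  proof (intro equalityI subsetI)
    fix y assume "y \<in> \<sigma> ` carrier D1" thus "y \<in> carrier D2" using fz by auto
  next
    fix h assume h: "h \<in> carrier D2"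
    have "(fvec_zero, h) \<in> carrier ?G2" using h p0 by (simp add: sd_carrier fvec_zero_mem)
    then obtain x where x: "x \<in> carrier ?G1" and fx: "f x = (fvec_zero, h)" using fs by (metis imageE)
    obtain v g where xv: "x = (v, g)" and v: "v \<in> fvecs p d1" and g: "g \<in> carrier D1"
      using x by (cases x) (auto simp: sd_carrier)
    have "(v, \<one>\<^bsub>D1\<^esub>) \<otimes>\<^bsub>?G1\<^esub> (fvec_zero, g) = x"
      using psi_one_act[OF p D1 psi1 fvec_zero_mem[OF p0, of d1]] fvec_add_zero(2)[OF v] g
      by (simp add: sd_mult xv fmat_act_zero)
    hence "f x = f (v, \<one>\<^bsub>D1\<^esub>) \<otimes>\<^bsub>?G2\<^esub> f (fvec_zero, g)" using fm[OF v1c[OF v] z1c[OF g]] by simp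
    hence "h = \<one>\<^bsub>D2\<^esub> \<otimes>\<^bsub>D2\<^esub> \<sigma> g" using fx fV[OF v] by (simp add: sd_mult_pair \<sigma>_def)
    hence "h = \<sigma> g" using fz[OF g] by simp
    thus "h \<in> \<sigma> ` carrier D1" using g by blast
  qed
  have siso: "\<sigma> \<in> iso D1 D2" using sh sinj ssurj by (simp add: iso_iff)
  have inter: "fmat_mult p d1 M (psi1 g) = fmat_mult p d1 ((psi2 \<circ> \<sigma>) g) M" if g: "g \<in> carrier D1" for g
  proof -
    obtain u where u: "f (fvec_zero, g) = (u, \<sigma> g)" "u \<in> fvecs p d1" using fz[OF g] by metis
    have sg: "\<sigma> g \<in> carrier D2" using fz[OF g] by simp
    have "T (fmat_act p d1 (psi1 g) v) = fmat_act p d1 (psi2 (\<sigma> g)) (T v)" if v: "v \<in> fvecs p d1" for v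
    proof -
      define w where "w = fmat_act p d1 (psi1 g) v"
      have w: "w \<in> fvecs p d1" using p0 by (simp add: w_def fmat_act_closed)
      have e1: "(fvec_zero, g) \<otimes>\<^bsub>?G1\<^esub> (v, \<one>\<^bsub>D1\<^esub>) = (w, g)"
        using fvec_add_zero(1)[OF w] g by (simp add: sd_mult w_def)
      have e2: "(w, \<one>\<^bsub>D1\<^esub>) \<otimes>\<^bsub>?G1\<^esub> (fvec_zero, g) = (w, g)"
        using psi_one_act[OF p D1 psi1 fvec_zero_mem[OF p0, of d1]] fvec_add_zero(2)[OF w] g
        by (simp add: sd_mult fmat_act_zero)
      have "f (fvec_zero, g) \<otimes>\<^bsub>?G2\<^esub> f (v, \<one>\<^bsub>D1\<^esub>) = f (w, \<one>\<^bsub>D1\<^esub>) \<otimes>\<^bsub>?G2\<^esub> f (fvec_zero, g)"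
        using fm[OF z1c[OF g] v1c[OF v]] fm[OF v1c[OF w] z1c[OF g]] e1 e2 by simp
      hence "fvec_add p d1 u (fmat_act p d1 (psi2 (\<sigma> g)) (T v)) = fvec_add p d1 (T w) (fmat_act p d1 (psi2 \<one>\<^bsub>D2\<^esub>) u)"
        using u(1) fV[OF v] fV[OF w] dd by (simp add: sd_mult)
      also have "\<dots> = fvec_add p d1 u (T w)"
        using psi_one_act[OF p D2 psi2 u(2)[folded dd]] dd by (simp add: fvec_add_comm)
      finally have "fvec_add p d1 u (fmat_act p d1 (psi2 (\<sigma> g)) (T v)) = fvec_add p d1 u (T w)" .
      hence "fmat_act p d1 (psi2 (\<sigma> g)) (T v) = T w"
        by (rule fvec_add_cancel[OF fmat_act_closed[OF p0] Tc[OF w]])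
      thus ?thesis by (simp add: w_def)
    qed
    thus ?thesis
      using fmat_eqI[OF p fmat_mult_closed[OF p0] fmat_mult_closed[OF p0]]
      by (simp add: fmat_act_mult Mact fmat_act_closed[OF p0] Tc)
  qed
  have "rep_equiv D1 p d1 d2 psi1 (psi2 \<circ> \<sigma>)"
    unfolding rep_equiv_def using dd MG inter by blast
  thus ?thesis using siso by blast
qed


theorem lemma5p2:
  fixes p :: int and d1 d2 :: nat
    and D1 :: "('a, 'c) monoid_scheme" and D2 :: "('b, 'e) monoid_scheme"
    and psi1 :: "'a \<Rightarrow> nat \<Rightarrow> nat \<Rightarrow> int" and psi2 :: "'b \<Rightarrow> nat \<Rightarrow> nat \<Rightarrow> int"
  assumes "Factorial_Ring.prime p"
    and "group D1" and "finite (carrier D1)"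
    and "group D2" and "finite (carrier D2)"
    and "psi1 \<in> hom D1 (GL p d1)"
    and "psi2 \<in> hom D2 (GL p d2)"
    and "\<not> p dvd (int (order D1) * int (order D2))"
  shows "(semidirect p d1 D1 psi1 \<cong> semidirect p d2 D2 psi2 \<longleftrightarrow>
           (\<exists>\<sigma>. \<sigma> \<in> iso D1 D2 \<and> rep_equiv D1 p d1 d2 psi1 (psi2 \<circ> \<sigma>)))
       \<and> (\<forall>\<sigma>. \<sigma> \<in> iso D1 D2 \<and> rep_equiv D1 p d1 d2 psi1 (psi2 \<circ> \<sigma>) \<longrightarrow>
           (\<exists>f \<in> iso (semidirect p d1 D1 psi1) (semidirect p d2 D2 psi2).
              f ` complement D1 = complement D2 \<and>
              (\<forall>g \<in> carrier D1. f (fvec_zero, g) = (fvec_zero, \<sigma> g))))"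
proof -
  have p: "1 < p" using assms(1) by (simp add: prime_gt_1_int)
  have nd1: "\<not> p dvd int (order D1)" using assms(8) dvd_mult2 by blast
  have nd2: "\<not> p dvd int (order D2)" using assms(8) dvd_mult by blast
  have B: "\<forall>\<sigma>. \<sigma> \<in> iso D1 D2 \<and> rep_equiv D1 p d1 d2 psi1 (psi2 \<circ> \<sigma>) \<longrightarrow>
           (\<exists>f \<in> iso (semidirect p d1 D1 psi1) (semidirect p d2 D2 psi2).
              f ` complement D1 = complement D2 \<and>
              (\<forall>g \<in> carrier D1. f (fvec_zero, g) = (fvec_zero, \<sigma> g)))"
    using backward[OF p assms(2) assms(4) assms(6) assms(7)] by blast
  have "semidirect p d1 D1 psi1 \<cong> semidirect p d2 D2 psi2 \<longleftrightarrow>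
           (\<exists>\<sigma>. \<sigma> \<in> iso D1 D2 \<and> rep_equiv D1 p d1 d2 psi1 (psi2 \<circ> \<sigma>))"
  proof
    assume "semidirect p d1 D1 psi1 \<cong> semidirect p d2 D2 psi2"
    then obtain f where "f \<in> iso (semidirect p d1 D1 psi1) (semidirect p d2 D2 psi2)"
      by (auto simp: is_iso_def)
    thus "\<exists>\<sigma>. \<sigma> \<in> iso D1 D2 \<and> rep_equiv D1 p d1 d2 psi1 (psi2 \<circ> \<sigma>)"
      by (rule forward[OF assms(1) assms(2) assms(4) assms(6) assms(7) nd1 nd2])
  next
    assume "\<exists>\<sigma>. \<sigma> \<in> iso D1 D2 \<and> rep_equiv D1 p d1 d2 psi1 (psi2 \<circ> \<sigma>)"
    then obtain f where "f \<in> iso (semidirect p d1 D1 psi1) (semidirect p d2 D2 psi2)"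
      using B by blast
    thus "semidirect p d1 D1 psi1 \<cong> semidirect p d2 D2 psi2" by (auto simp: is_iso_def)
  qed
  thus ?thesis using B by blast
qed

end
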